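(* Let $D$ be a collection of $10$ points of $\mathbb{CP}^1$ counted with multiplicities (i.e. an effective divisor of degree $10$ on $\mathbb{CP}^1$) whose support consists of at least $3$ distinct points, and let $T$ be the group of Möbius transformations of $\mathbb{CP}^1$ that map $D$ to itself (preserving multiplicities). Then $|T| \leq 24$. *)

theory Defs
  imports Complex_Main "HOL-Library.Multiset"
begin

text \<open>The Riemann sphere CP^1 is modelled as complex option, None being the point at infinity.\<close>
type_synonym cp1 = "complex option"

definition moebius :: "complex \<Rightarrow> complex \<Rightarrow> complex \<Rightarrow> complex \<Rightarrow> cp1 \<Rightarrow> cp1" where
  "moebius a b c d p =
     (case p of
        None \<Rightarrow> (if c = 0 then None else Some (a / c))
      | Some z \<Rightarrow> (if c * z + d = 0 then None else Some ((a * z + b) / (c * z + d))))"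

definition is_moebius :: "(cp1 \<Rightarrow> cp1) \<Rightarrow> bool" where
  "is_moebius f \<longleftrightarrow> (\<exists>a b c d. a * d - b * c \<noteq> 0 \<and> f = moebius a b c d)"

definition moebius_stabilizer :: "cp1 multiset \<Rightarrow> (cp1 \<Rightarrow> cp1) set" where
  "moebius_stabilizer D = {f. is_moebius f \<and> image_mset f D = D}"

end

theory Submission
  imports Defs "HOL-Algebra.Group_Action"
begin

lemma moebius_comp:
  assumes "a*d - b*c \<noteq> 0" "a'*d' - b'*c' \<noteq> 0"
  shows "moebius a b c d (moebius a' b' c' d' p) =
         moebius (a*a'+b*c') (a*b'+b*d') (c*a'+d*c') (c*b'+d*d') p"
proof (cases p)
  case None
  show ?thesis
  proof (cases "c' = 0")
    case True
    then have "a' \<noteq> 0" using assms(2) by auto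
    then show ?thesis using None True by (auto simp: moebius_def)
  next
    case False
    define w where "w = a'/c'"
    have i: "moebius a' b' c' d' p = Some w" using None False by (simp add: moebius_def w_def)
    have e: "c * w + d = (c*a'+d*c')/c'" using False unfolding w_def by (simp add: field_simps)
    have e2: "a * w + b = (a*a'+b*c')/c'" using False unfolding w_def by (simp add: field_simps)
    have q: "(a * w + b) / (c * w + d) = (a*a'+b*c')/(c*a'+d*c')" unfolding e e2 using False by simp
    have z: "(c * w + d = 0) = (c*a'+d*c' = 0)" unfolding e using False by simp
    have "moebius a b c d (Some w) = moebius (a*a'+b*c') (a*b'+b*d') (c*a'+d*c') (c*b'+d*d') None"
      unfolding moebius_def option.case q z by simp
    then show ?thesis using i None by simp
  qed
next
  case (Some z)
  show ?thesis
  proof (cases "c'*z + d' = 0")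
    case True
    have u: "a'*z + b' \<noteq> 0"
    proof
      assume h: "a'*z+b' = 0"
      have "a'*d' - b'*c' = a'*(c'*z+d') - c'*(a'*z+b')" by (simp add: algebra_simps)
      then show False using h True assms(2) by simp
    qed
    have "(c*a'+d*c')*z + (c*b'+d*d') = c*(a'*z+b') + d*(c'*z+d')" by (simp add: algebra_simps)
    then have e1: "(c*a'+d*c')*z + (c*b'+d*d') = c*(a'*z+b')" using True by simp
    have "(a*a'+b*c')*z + (a*b'+b*d') = a*(a'*z+b') + b*(c'*z+d')" by (simp add: algebra_simps)
    then have e2: "(a*a'+b*c')*z + (a*b'+b*d') = a*(a'*z+b')" using True by simp
    show ?thesis using Some True u by (auto simp: moebius_def e1 e2)
  next
    case False
    define w where "w = (a'*z+b')/(c'*z+d')"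
    have i: "moebius a' b' c' d' p = Some w" using Some False by (simp add: moebius_def w_def)
    have e: "c * w + d = ((c*a'+d*c')*z + (c*b'+d*d'))/(c'*z+d')" using False unfolding w_def by (simp add: field_simps)
    have e2: "a * w + b = ((a*a'+b*c')*z + (a*b'+b*d'))/(c'*z+d')" using False unfolding w_def by (simp add: field_simps)
    have q: "(a * w + b) / (c * w + d) = ((a*a'+b*c')*z + (a*b'+b*d'))/((c*a'+d*c')*z + (c*b'+d*d'))" unfolding e e2 using False by simp
    have zz: "(c * w + d = 0) = ((c*a'+d*c')*z + (c*b'+d*d') = 0)" unfolding e using False by simp
    have "moebius a b c d (Some w) = moebius (a*a'+b*c') (a*b'+b*d') (c*a'+d*c') (c*b'+d*d') (Some z)"
      unfolding moebius_def option.case q zz by simp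
    then show ?thesis using i Some by simp
  qed
qed

lemma det_mult: "(a*a'+b*c')*(c*b'+d*d') - (a*b'+b*d')*(c*a'+d*c') = (a*d - b*c)*(a'*d'-b'*c'::complex)"
  by (simp add: algebra_simps)

lemma moebius_scale:
  assumes "k \<noteq> 0" shows "moebius (k*a) (k*b) (k*c) (k*d) = moebius a b c d"
proof
  fix p show "moebius (k*a) (k*b) (k*c) (k*d) p = moebius a b c d p"
  proof (cases p)
    case None then show ?thesis using assms by (simp add: moebius_def)
  next
    case (Some z)
    have e1: "k*c*z + k*d = k*(c*z+d)" "k*a*z + k*b = k*(a*z+b)" by (simp_all add: algebra_simps)
    show ?thesis using Some assms by (simp add: moebius_def e1)
  qed
qed

lemma moebius_id: "moebius 1 0 0 1 = id"
proof
  fix p show "moebius 1 0 0 1 p = id p" by (cases p) (simp_all add: moebius_def)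
qed

lemma moebius_eq_id:
  assumes "a*d - b*c \<noteq> 0" "moebius a b c d = id"
  shows "c = 0 \<and> b = 0 \<and> a = d"
proof -
  have "moebius a b c d None = None" using assms(2) by simp
  then have c: "c = 0" by (simp add: moebius_def split: if_splits)
  then have d: "d \<noteq> 0" and a: "a \<noteq> 0" using assms(1) by auto
  have "moebius a b c d (Some 0) = Some 0" using assms(2) by simp
  then have b: "b = 0" using c d by (simp add: moebius_def)
  have "moebius a b c d (Some 1) = Some 1" using assms(2) by simp
  then have "a = d" using c d b by (simp add: moebius_def split: if_splits)
  then show ?thesis using b c by simp
qed

lemma is_moebius_comp: "is_moebius f \<Longrightarrow> is_moebius g \<Longrightarrow> is_moebius (f \<circ> g)"
proof -
  assume "is_moebius f" "is_moebius g"
  then obtain a b c d a' b' c' d' where h: "a*d-b*c \<noteq> 0" "f = moebius a b c d"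
     "a'*d'-b'*c' \<noteq> 0" "g = moebius a' b' c' d'" unfolding is_moebius_def by blast
  have "f \<circ> g = moebius (a*a'+b*c') (a*b'+b*d') (c*a'+d*c') (c*b'+d*d')"
    using h moebius_comp[OF h(1) h(3)] by (auto simp: fun_eq_iff)
  moreover have "(a*a'+b*c')*(c*b'+d*d') - (a*b'+b*d')*(c*a'+d*c') \<noteq> 0"
    using h det_mult by simp
  ultimately show ?thesis unfolding is_moebius_def by blast
qed

lemma is_moebius_id: "is_moebius id"
  unfolding is_moebius_def using moebius_id by (metis mult_1 diff_zero mult_zero_left one_neq_zero)

lemma is_moebius_inv:
  assumes "is_moebius f" shows "\<exists>g. is_moebius g \<and> g \<circ> f = id \<and> f \<circ> g = id"
proof -
  obtain a b c d where h: "a*d-b*c \<noteq> 0" "f = moebius a b c d" using assms unfolding is_moebius_def by blast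
  let ?g = "moebius d (-b) (-c) a"
  have dg: "d*a - (-b)*(-c) \<noteq> 0" using h(1) by (simp add: algebra_simps)
  have "?g \<circ> f = moebius (d*a+(-b)*c) (d*b+(-b)*d) ((-c)*a+a*c) ((-c)*b+a*d)"
    using moebius_comp[OF dg h(1)] h by (auto simp: fun_eq_iff)
  also have "\<dots> = moebius ((a*d-b*c)*1) ((a*d-b*c)*0) ((a*d-b*c)*0) ((a*d-b*c)*1)"
    by (simp add: algebra_simps)
  also have "\<dots> = id" using moebius_scale[OF h(1), of 1 0 0 1] moebius_id by simp
  finally have 1: "?g \<circ> f = id" .
  have "f \<circ> ?g = moebius (a*d+b*(-c)) (a*(-b)+b*a) (c*d+d*(-c)) (c*(-b)+d*a)"
    using moebius_comp[OF h(1) dg] h by (auto simp: fun_eq_iff)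
  also have "\<dots> = moebius ((a*d-b*c)*1) ((a*d-b*c)*0) ((a*d-b*c)*0) ((a*d-b*c)*1)"
    by (simp add: algebra_simps)
  also have "\<dots> = id" using moebius_scale[OF h(1), of 1 0 0 1] moebius_id by simp
  finally have 2: "f \<circ> ?g = id" .
  show ?thesis using 1 2 dg unfolding is_moebius_def by blast
qed

lemma fix_quad:
  assumes "a*d - b*c \<noteq> 0" "c*z^2 + (d-a)*z - b = 0"
  shows "moebius a b c d (Some z) = Some z"
proof -
  have nz: "c*z + d \<noteq> 0"
  proof
    assume h: "c*z+d = 0"
    have "a*z + b = z*(c*z+d)" using assms(2) by (simp add: algebra_simps power2_eq_square)
    then have h2: "a*z+b = 0" using h by simp
    have "a*d - b*c = a*(-(c*z)) - (-(a*z))*c" using h h2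
      by (metis add.commute add_eq_0_iff2 neg_eq_iff_add_eq_0)
    then show False using assms(1) by (simp add: algebra_simps)
  qed
  have "a*z + b = z*(c*z+d)" using assms(2) by (simp add: algebra_simps power2_eq_square)
  then have "(a*z+b)/(c*z+d) = z" using nz by (simp add: field_simps)
  then show ?thesis using nz by (simp add: moebius_def)
qed

lemma fix_quad_conv:
  assumes "moebius a b c d (Some z) = Some z"
  shows "c*z^2 + (d-a)*z - b = 0"
proof -
  have nz: "c*z+d \<noteq> 0" and e: "(a*z+b)/(c*z+d) = z" using assms by (auto simp: moebius_def split: if_splits)
  then have "a*z+b = z*(c*z+d)" by (simp add: field_simps)
  then show ?thesis by (simp add: algebra_simps power2_eq_square)
qed

lemma quad3:
  assumes "c \<noteq> 0" "c*z1^2 + e*z1 - b = 0" "c*z2^2 + e*z2 - b = 0" "c*z3^2 + e*z3 - b = (0::complex)"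
    "z1 \<noteq> z2" "z1 \<noteq> z3" "z2 \<noteq> z3"
  shows False
proof -
  have "(z1-z2)*(c*(z1+z2)+e) = 0" using assms(2,3) by algebra
  then have 1: "c*(z1+z2)+e = 0" using assms(5) by simp
  have "(z1-z3)*(c*(z1+z3)+e) = 0" using assms(2,4) by algebra
  then have 2: "c*(z1+z3)+e = 0" using assms(6) by simp
  have "c*(z2-z3) = 0" using 1 2 by algebra
  then show False using assms(1,7) by simp
qed

lemma three_fixed:
  assumes "a*d - b*c \<noteq> 0" "f = moebius a b c d" "f p1 = p1" "f p2 = p2" "f p3 = p3"
    "p1 \<noteq> p2" "p1 \<noteq> p3" "p2 \<noteq> p3"
  shows "f = id"
proof (cases "c = 0")
  case False
  have "f None \<noteq> None" using False assms(2) by (simp add: moebius_def)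
  then obtain z1 z2 z3 where z: "p1 = Some z1" "p2 = Some z2" "p3 = Some z3"
    using assms(3-5) by (metis option.exhaust)
  have "c*z1^2 + (d-a)*z1 - b = 0" "c*z2^2 + (d-a)*z2 - b = 0" "c*z3^2 + (d-a)*z3 - b = 0"
    using fix_quad_conv assms(2-5) z by auto
  then show ?thesis
    using quad3[OF False] assms(6-8) z by blast
next
  case True
  obtain z1 z2 where zz: "z1 \<noteq> z2" "Some z1 \<in> {p1,p2,p3}" "Some z2 \<in> {p1,p2,p3}"
    using assms(6-8) by (cases p1; cases p2; cases p3) auto
  have "f (Some z1) = Some z1" "f (Some z2) = Some z2" using zz assms(3-5) by auto
  then have r1: "(d-a)*z1 - b = 0" and r2: "(d-a)*z2 - b = 0"
    using fix_quad_conv[of a b c d] True assms(2) by auto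
  have "(d-a)*(z1-z2) = 0" using r1 r2 by algebra
  then have ad: "a = d" using zz(1) by simp
  then have b: "b = 0" using r1 by simp
  have a: "a \<noteq> 0" using assms(1) True by simp
  have "moebius a b c d = moebius (a*1) (a*0) (a*0) (a*1)" using ad b True by simp
  also have "\<dots> = id" using moebius_scale[OF a, of 1 0 0 1] moebius_id by simp
  finally show ?thesis using assms(2) by simp
qed

lemma parabolic_pow:
  assumes det: "a*d - b*c \<noteq> 0" and par: "(a-d)^2 + 4*b*c = 0" and l: "2*l = a + d"
    and n: "n \<ge> 1"
  shows "(moebius a b c d)^^n = moebius (l + of_nat n*(a-l)) (of_nat n*b) (of_nat n*c) (l + of_nat n*(d-l))"
  using n
proof (induction n rule: dec_induct)
  case base
  show ?case by simp
next
  case (step n)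
  let ?m = "of_nat n :: complex"
  have detl: "a*d - b*c = l^2" using par l by algebra
  then have l0: "l \<noteq> 0" using det by simp
  have detn: "(l + ?m*(a-l))*(l + ?m*(d-l)) - (?m*b)*(?m*c) = l^2" using par l by algebra
  have "(moebius a b c d)^^(Suc n) = moebius a b c d \<circ> (moebius a b c d)^^n" by simp
  also have "\<dots> = moebius (a*(l + ?m*(a-l))+b*(?m*c)) (a*(?m*b)+b*(l + ?m*(d-l)))
        (c*(l + ?m*(a-l))+d*(?m*c)) (c*(?m*b)+d*(l + ?m*(d-l)))"
    using step.IH moebius_comp[OF det, where a'="l + ?m*(a-l)" and b'="?m*b" and c'="?m*c" and d'="l + ?m*(d-l)"] detn l0
    by (auto simp: fun_eq_iff)
  also have "\<dots> = moebius (l*(l + (?m+1)*(a-l))) (l*((?m+1)*b)) (l*((?m+1)*c)) (l*(l + (?m+1)*(d-l)))"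
  proof -
    have "a*(l + ?m*(a-l))+b*(?m*c) = l*(l + (?m+1)*(a-l))" using par l by algebra
    moreover have "a*(?m*b)+b*(l + ?m*(d-l)) = l*((?m+1)*b)" using par l by algebra
    moreover have "c*(l + ?m*(a-l))+d*(?m*c) = l*((?m+1)*c)" using par l by algebra
    moreover have "c*(?m*b)+d*(l + ?m*(d-l)) = l*(l + (?m+1)*(d-l))" using par l by algebra
    ultimately show ?thesis by simp
  qed
  also have "\<dots> = moebius (l + (?m+1)*(a-l)) ((?m+1)*b) ((?m+1)*c) (l + (?m+1)*(d-l))"
    by (rule moebius_scale[OF l0])
  finally show ?case by (simp add: add.commute)
qed

lemma finite_order_two_fixed:
  assumes det: "a*d - b*c \<noteq> 0" and f: "f = moebius a b c d" and nid: "f \<noteq> id"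
    and n: "n \<ge> 1" and pw: "f^^n = id"
  shows "\<exists>p q. p \<noteq> q \<and> f p = p \<and> f q = q"
proof (cases "(a-d)^2 + 4*b*c = 0")
  case True
  define l where "l = (a+d)/2"
  have l2: "2*l = a+d" unfolding l_def by simp
  let ?m = "of_nat n :: complex"
  have detn: "(l + ?m*(a-l))*(l + ?m*(d-l)) - (?m*b)*(?m*c) = l^2" using True l2 by algebra
  have detl: "a*d - b*c = l^2" using True l2 by algebra
  have "moebius (l + ?m*(a-l)) (?m*b) (?m*c) (l + ?m*(d-l)) = id"
    using parabolic_pow[OF det True l2 n] pw f by simp
  from moebius_eq_id[OF _ this] detn detl det
  have h: "?m*c = 0" "?m*b = 0" "l + ?m*(a-l) = l + ?m*(d-l)" by auto
  have m0: "?m \<noteq> 0" using n by simp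
  have c: "c = 0" and b: "b = 0" using h(1,2) m0 by auto
  have "?m*(a-d) = 0" using h(3) by (simp add: algebra_simps)
  then have ad: "a = d" using m0 by simp
  have a: "a \<noteq> 0" using det c by simp
  have "moebius a b c d = moebius (a*1) (a*0) (a*0) (a*1)" using ad b c by simp
  also have "\<dots> = id" using moebius_scale[OF a, of 1 0 0 1] moebius_id by simp
  finally show ?thesis using nid f by simp
next
  case False
  show ?thesis
  proof (cases "c = 0")
    case True
    then have "a \<noteq> d" using False by auto
    have 1: "f None = None" using True f by (simp add: moebius_def)
    have "c*(b/(d-a))^2 + (d-a)*(b/(d-a)) - b = 0" using True \<open>a \<noteq> d\<close> by simp
    then have 2: "f (Some (b/(d-a))) = Some (b/(d-a))" using fix_quad[OF det] f by simp
    show ?thesis using 1 2 by (metis option.distinct(1))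
  next
    case c: False
    define r where "r = csqrt ((a-d)^2 + 4*b*c)"
    have r2: "r^2 = (a-d)^2 + 4*b*c" unfolding r_def by simp
    have r0: "r \<noteq> 0" using False r2 by auto
    define z1 where "z1 = (a-d+r)/(2*c)"
    define z2 where "z2 = (a-d-r)/(2*c)"
    have q1: "c*z1^2 + (d-a)*z1 - b = 0"
    proof -
      have "4*c*(c*z1^2 + (d-a)*z1 - b) = r^2 - ((a-d)^2 + 4*b*c)"
        unfolding z1_def using c by (simp add: field_simps power2_eq_square; simp add: algebra_simps)
      then show ?thesis using r2 c by simp
    qed
    have q2: "c*z2^2 + (d-a)*z2 - b = 0"
    proof -
      have "4*c*(c*z2^2 + (d-a)*z2 - b) = r^2 - ((a-d)^2 + 4*b*c)"
        unfolding z2_def using c by (simp add: field_simps power2_eq_square; simp add: algebra_simps)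
      then show ?thesis using r2 c by simp
    qed
    have "z1 - z2 = r/c" unfolding z1_def z2_def using c by (simp add: field_simps)
    then have "z1 \<noteq> z2" using r0 c by auto
    then have "Some z1 \<noteq> Some z2" by simp
    then show ?thesis using fix_quad[OF det q1] fix_quad[OF det q2] f by blast
  qed
qed

lemma card_set_le_size: "card (set_mset D) \<le> size D"
  by (metis mset_set_set_mset_msubset size_mset_mono size_mset_set)

lemma stab_id: "id \<in> moebius_stabilizer D"
  unfolding moebius_stabilizer_def using is_moebius_id by simp

lemma stab_comp: "f \<in> moebius_stabilizer D \<Longrightarrow> g \<in> moebius_stabilizer D \<Longrightarrow> f \<circ> g \<in> moebius_stabilizer D"
  unfolding moebius_stabilizer_def using is_moebius_comp
  by (metis (mono_tags, lifting) mem_Collect_eq multiset.map_comp)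

lemma stab_inv: "f \<in> moebius_stabilizer D \<Longrightarrow> \<exists>g \<in> moebius_stabilizer D. g \<circ> f = id \<and> f \<circ> g = id"
proof -
  assume f: "f \<in> moebius_stabilizer D"
  then obtain g where g: "is_moebius g" "g \<circ> f = id" "f \<circ> g = id"
    using is_moebius_inv unfolding moebius_stabilizer_def by blast
  have "image_mset g D = image_mset g (image_mset f D)" using f unfolding moebius_stabilizer_def by simp
  also have "\<dots> = D" by (simp add: multiset.map_comp g(2))
  finally show ?thesis using g unfolding moebius_stabilizer_def by blast
qed

lemma stab_set: "f \<in> moebius_stabilizer D \<Longrightarrow> f ` set_mset D = set_mset D"
  unfolding moebius_stabilizer_def by (metis (mono_tags, lifting) mem_Collect_eq multiset.set_map)

lemma stab_inj: "f \<in> moebius_stabilizer D \<Longrightarrow> inj f"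
proof -
  assume "f \<in> moebius_stabilizer D"
  then obtain g where "g \<circ> f = id" using stab_inv by blast
  then have "\<And>x. g (f x) = x" by (metis comp_apply id_apply)
  then show "inj f" by (rule inj_on_inverseI)
qed

lemma stab_bij: "f \<in> moebius_stabilizer D \<Longrightarrow> bij f"
proof -
  assume f: "f \<in> moebius_stabilizer D"
  then obtain g where "f \<circ> g = id" using stab_inv by blast
  then have "\<And>x. f (g x) = x" by (metis comp_apply id_apply)
  then have "surj f" by (metis surjI)
  then show "bij f" using stab_inj[OF f] by (simp add: bij_def)
qed

lemma stab_moeb: "f \<in> moebius_stabilizer D \<Longrightarrow> \<exists>a b c d. a*d-b*c \<noteq> 0 \<and> f = moebius a b c d"
  unfolding moebius_stabilizer_def is_moebius_def by blast

lemma stab_three_fixed: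
  assumes "f \<in> moebius_stabilizer D" "f p1 = p1" "f p2 = p2" "f p3 = p3"
    "p1 \<noteq> p2" "p1 \<noteq> p3" "p2 \<noteq> p3"
  shows "f = id"
  using stab_moeb[OF assms(1)] three_fixed assms by metis

lemma stab_finite:
  assumes "card (set_mset D) \<ge> 3"
  shows "finite (moebius_stabilizer D)"
proof -
  let ?S = "set_mset D" and ?T = "moebius_stabilizer D"
  obtain x1 x2 x3 where x: "x1 \<in> ?S" "x2 \<in> ?S" "x3 \<in> ?S" "x1 \<noteq> x2" "x1 \<noteq> x3" "x2 \<noteq> x3"
  proof -
    have "3 \<le> card ?S" by fact
    then obtain B where "B \<subseteq> ?S" "card B = 3" by (meson obtain_subset_with_card_n)
    then show ?thesis using that by (auto simp: card_3_iff)
  qed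
  let ?h = "\<lambda>f. (f x1, f x2, f x3)"
  have "inj_on ?h ?T"
  proof (rule inj_onI)
    fix f g assume f: "f \<in> ?T" and g: "g \<in> ?T" and e: "?h f = ?h g"
    obtain g' where g': "g' \<in> ?T" "g' \<circ> g = id" "g \<circ> g' = id" using stab_inv[OF g] by blast
    have gx: "\<And>x. g' (g x) = x" using g'(2) by (metis comp_apply id_apply)
    have "g' \<circ> f = id"
      using stab_three_fixed[OF stab_comp[OF g'(1) f], of x1 x2 x3] e x gx by auto
    then have "g \<circ> (g' \<circ> f) = g" by simp
    then show "f = g" using g'(3) by (metis comp_assoc id_comp)
  qed
  moreover have "?h ` ?T \<subseteq> ?S \<times> ?S \<times> ?S"
    using stab_set x by blast
  ultimately show ?thesis
    by (meson finite_SigmaI finite_set_mset finite_imageD finite_subset)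
qed

lemma stab_pow: "f \<in> moebius_stabilizer D \<Longrightarrow> f^^n \<in> moebius_stabilizer D"
  by (induction n) (auto simp: stab_id stab_comp)

lemma stab_finite_order:
  assumes "finite (moebius_stabilizer D)" "f \<in> moebius_stabilizer D"
  shows "\<exists>n\<ge>1. f^^n = id"
proof -
  have "\<not> inj (\<lambda>n::nat. f^^n)"
  proof
    assume "inj (\<lambda>n::nat. f^^n)"
    then have "infinite (range (\<lambda>n::nat. f^^n))" by (simp add: finite_image_iff)
    moreover have "range (\<lambda>n::nat. f^^n) \<subseteq> moebius_stabilizer D" using stab_pow[OF assms(2)] by auto
    ultimately show False using assms(1) finite_subset by blast
  qed
  then obtain i j where ij: "i \<noteq> j" "f^^i = f^^j" unfolding inj_def by blast
  then obtain i j where ij: "i < j" "f^^i = f^^j" by (metis linorder_neq_iff)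
  have "f^^j = f^^(j-i) \<circ> f^^i" using ij(1) by (metis funpow_add le_add_diff_inverse2 less_imp_le)
  then have e: "f^^(j-i) \<circ> f^^i = id \<circ> f^^i" using ij by simp
  have "bij (f^^i)" using stab_bij[OF assms(2)] by simp
  then have "surj (f^^i)" by (rule bij_is_surj)
  have "f^^(j-i) = id"
  proof
    fix x
    obtain y where y: "x = (f^^i) y" using \<open>surj (f^^i)\<close> by (metis surjD)
    have "(f^^(j-i) \<circ> f^^i) y = (id \<circ> f^^i) y" using e by simp
    then show "(f^^(j-i)) x = id x" using y by simp
  qed
  then show ?thesis using ij(1) by (intro exI[of _ "j-i"]) auto
qed

lemma stab_fix2:
  assumes "finite (moebius_stabilizer D)" "f \<in> moebius_stabilizer D" "f \<noteq> id"
  shows "card {p. f p = p} = 2"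
proof -
  obtain a b c d where m: "a*d-b*c \<noteq> 0" "f = moebius a b c d" using stab_moeb[OF assms(2)] by blast
  obtain n where n: "n \<ge> 1" "f^^n = id" using stab_finite_order[OF assms(1,2)] by blast
  obtain p q where pq: "p \<noteq> q" "f p = p" "f q = q" using finite_order_two_fixed[OF m assms(3) n] by blast
  have "{p. f p = p} = {p, q}"
  proof
    show "{p, q} \<subseteq> {p. f p = p}" using pq by auto
    show "{p. f p = p} \<subseteq> {p, q}"
    proof
      fix x assume "x \<in> {p. f p = p}"
      then have "f x = x" by simp
      then show "x \<in> {p, q}" using stab_three_fixed[OF assms(2) pq(2,3), of x] pq(1) assms(3) by auto
    qed
  qed
  then show ?thesis using pq(1) by simp
qed

lemma div_cases:
  fixes s N :: nat
  assumes "s dvd N" "2*s \<le> N" "N > 0"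
  shows "s*2 = N \<or> s*3 = N \<or> s*4 = N \<or> s*5 = N \<or> 6*s \<le> N"
proof -
  obtain k where k: "N = s*k" using assms(1) by auto
  have "k \<ge> 2"
  proof (rule ccontr)
    assume "\<not> k \<ge> 2"
    then have "k = 0 \<or> k = 1" by auto
    then show False using k assms by auto
  qed
  then have "k = 2 \<or> k = 3 \<or> k = 4 \<or> k = 5 \<or> k \<ge> 6" by auto
  then show ?thesis
  proof (elim disjE)
    assume "k \<ge> 6" then have "s*6 \<le> s*k" by simp
    then show ?thesis using k by simp
  qed (use k in auto)
qed

lemma arith_final:
  fixes N s1 s2 s3 :: nat
  assumes "N \<ge> 25" "s1 dvd N" "s2 dvd N" "s3 dvd N" "2*s1 \<le> N" "2*s2 \<le> N" "2*s3 \<le> N"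
    "s1 + s2 + s3 = N + 2"
    "3 \<le> (if s1 \<le> 10 then s1 else 0) + (if s2 \<le> 10 then s2 else 0) + (if s3 \<le> 10 then s3 else 0)"
  shows False
proof -
  have N0: "N > 0" using assms(1) by simp
  from div_cases[OF assms(2,5) N0] div_cases[OF assms(3,6) N0] div_cases[OF assms(4,7) N0]
  show False using assms(1,8,9)
    by (elim disjE; simp split: if_splits; linarith)
qed

theorem lemma4p7:
  fixes D :: "cp1 multiset"
  assumes "size D = 10"
    and "card (set_mset D) \<ge> 3"
  shows "finite (moebius_stabilizer D) \<and> card (moebius_stabilizer D) \<le> 24"
proof -
  define T where "T = moebius_stabilizer D"
  define S where "S = set_mset D"
  have finT: "finite T" unfolding T_def using stab_finite assms(2) by blast
  have S10: "card S \<le> 10" unfolding S_def using card_set_le_size[of D] assms(1) by simp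
  have S3: "card S \<ge> 3" unfolding S_def using assms(2) by simp
  have finS: "finite S" unfolding S_def by simp
  define N where "N = card T"
  define P where "P = {p. \<exists>h\<in>T. h \<noteq> id \<and> h p = p}"
  define E where "E = P \<union> S"
  have fix2: "\<And>h. h \<in> T \<Longrightarrow> h \<noteq> id \<Longrightarrow> card {p. h p = p} = 2"
    unfolding T_def using stab_fix2 finT T_def by blast
  have finfix: "\<And>h. h \<in> T \<Longrightarrow> h \<noteq> id \<Longrightarrow> finite {p. h p = p}"
    using fix2 by (metis card.infinite zero_neq_numeral)
  have "P = (\<Union>h\<in>T - {id}. {p. h p = p})" unfolding P_def by blast
  then have finP: "finite P" using finT finfix by auto
  have finE: "finite E" unfolding E_def using finP finS by simp
  have Tid: "id \<in> T" unfolding T_def by (rule stab_id)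
  have Tcomp: "\<And>f g. f \<in> T \<Longrightarrow> g \<in> T \<Longrightarrow> f \<circ> g \<in> T" unfolding T_def by (rule stab_comp)
  have Tinv: "\<And>f. f \<in> T \<Longrightarrow> \<exists>g\<in>T. g \<circ> f = id \<and> f \<circ> g = id" unfolding T_def by (rule stab_inv)
  have TS: "\<And>f. f \<in> T \<Longrightarrow> f ` S = S" unfolding T_def S_def by (rule stab_set)
  have Tinj: "\<And>f. f \<in> T \<Longrightarrow> inj f" unfolding T_def by (rule stab_inj)
  have TP: "\<And>g p. g \<in> T \<Longrightarrow> p \<in> P \<Longrightarrow> g p \<in> P"
  proof -
    fix g p assume g: "g \<in> T" and p: "p \<in> P"
    obtain h where h: "h \<in> T" "h \<noteq> id" "h p = p" using p unfolding P_def by blast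
    obtain g' where g': "g' \<in> T" "g' \<circ> g = id" "g \<circ> g' = id" using Tinv[OF g] by blast
    have k: "g \<circ> h \<circ> g' \<in> T" using Tcomp g h(1) g'(1) by blast
    have "(g \<circ> h \<circ> g') (g p) = g p" using g'(2) h(3) by (metis comp_apply id_apply)
    moreover have "g \<circ> h \<circ> g' \<noteq> id"
    proof
      assume "g \<circ> h \<circ> g' = id"
      then have "g' \<circ> (g \<circ> h \<circ> g') \<circ> g = g' \<circ> g" by simp
      then have "g' \<circ> (g \<circ> h) = id" using g'(2) by (simp add: comp_assoc)
      then have "(g' \<circ> g) \<circ> h = id" by (simp add: comp_assoc)
      then have "h = id" using g'(2) by simp
      then show False using h(2) by simp
    qed
    ultimately show "g p \<in> P" using k unfolding P_def by blast
  qed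
  have TE: "\<And>g x. g \<in> T \<Longrightarrow> x \<in> E \<Longrightarrow> g x \<in> E" unfolding E_def using TP TS by blast
  have Tbij: "\<And>g. g \<in> T \<Longrightarrow> bij_betw g E E"
  proof -
    fix g assume g: "g \<in> T"
    obtain g' where g': "g' \<in> T" "g' \<circ> g = id" "g \<circ> g' = id" using Tinv[OF g] by blast
    have "g ` E = E"
    proof
      show "g ` E \<subseteq> E" using TE g by blast
      show "E \<subseteq> g ` E"
      proof
        fix x assume "x \<in> E"
        then have "g' x \<in> E" using TE g'(1) by blast
        moreover have "g (g' x) = x" using g'(3) by (metis comp_apply id_apply)
        ultimately show "x \<in> g ` E" by (metis imageI)
      qed
    qed
    then show "bij_betw g E E" using Tinj[OF g] by (simp add: bij_betw_def inj_on_subset[of g UNIV])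
  qed
  define G :: "(cp1 \<Rightarrow> cp1) monoid" where "G = \<lparr>carrier = T, mult = (\<circ>), one = id\<rparr>"
  have grpG: "group G"
  proof (rule groupI)
    show "\<And>x y. x \<in> carrier G \<Longrightarrow> y \<in> carrier G \<Longrightarrow> x \<otimes>\<^bsub>G\<^esub> y \<in> carrier G"
      unfolding G_def using Tcomp by simp
    show "\<one>\<^bsub>G\<^esub> \<in> carrier G" unfolding G_def using Tid by simp
    show "\<And>x y z. x \<in> carrier G \<Longrightarrow> y \<in> carrier G \<Longrightarrow> z \<in> carrier G \<Longrightarrow>
       x \<otimes>\<^bsub>G\<^esub> y \<otimes>\<^bsub>G\<^esub> z = x \<otimes>\<^bsub>G\<^esub> (y \<otimes>\<^bsub>G\<^esub> z)"
      unfolding G_def by (simp add: comp_assoc)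
    show "\<And>x. x \<in> carrier G \<Longrightarrow> \<one>\<^bsub>G\<^esub> \<otimes>\<^bsub>G\<^esub> x = x" unfolding G_def by simp
    show "\<And>x. x \<in> carrier G \<Longrightarrow> \<exists>y\<in>carrier G. y \<otimes>\<^bsub>G\<^esub> x = \<one>\<^bsub>G\<^esub>"
      unfolding G_def using Tinv by fastforce
  qed
  define \<phi> :: "(cp1 \<Rightarrow> cp1) \<Rightarrow> cp1 \<Rightarrow> cp1" where "\<phi> = (\<lambda>g. restrict g E)"
  have act: "group_action G E \<phi>"
    unfolding group_action_def group_hom_def group_hom_axioms_def hom_def
  proof (intro conjI grpG group_BijGroup CollectI ballI)
    show "\<phi> \<in> carrier G \<rightarrow> carrier (BijGroup E)"
      unfolding G_def \<phi>_def BijGroup_def Bij_def using Tbij by auto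
    fix x y assume x: "x \<in> carrier G" and y: "y \<in> carrier G"
    have bx: "\<phi> x \<in> Bij E" and "\<phi> y \<in> Bij E" using x y Tbij unfolding G_def \<phi>_def Bij_def by auto
    then have "\<phi> x \<otimes>\<^bsub>BijGroup E\<^esub> \<phi> y = compose E (\<phi> x) (\<phi> y)" unfolding BijGroup_def by simp
    also have "\<dots> = \<phi> (x \<otimes>\<^bsub>G\<^esub> y)"
      unfolding G_def \<phi>_def compose_def using TE y unfolding G_def
      by (auto simp: fun_eq_iff restrict_def)
    finally show "\<phi> (x \<otimes>\<^bsub>G\<^esub> y) = \<phi> x \<otimes>\<^bsub>BijGroup E\<^esub> \<phi> y" by simp
  qed
  have ordG: "order G = N" unfolding order_def G_def N_def by simp
  have orbit_eq: "\<And>x. x \<in> E \<Longrightarrow> orbit G \<phi> x = {g x | g. g \<in> T}"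
    unfolding orbit_def G_def \<phi>_def by auto
  have stab_eq: "\<And>x. x \<in> E \<Longrightarrow> stabilizer G \<phi> x = {g \<in> T. g x = x}"
    unfolding stabilizer_def G_def \<phi>_def by auto
  have inv_eq: "\<And>g. invariants E \<phi> g = {x \<in> E. g x = x}"
    unfolding invariants_def \<phi>_def by auto
  show ?thesis
  proof (rule ccontr)
    assume "\<not> ?thesis"
    then have N25: "N \<ge> 25" using finT unfolding N_def T_def by auto
    interpret A: group_action G E \<phi> by (rule act)
    have cG: "carrier G = T" unfolding G_def by simp
    have burn: "card (orbits G E \<phi>) * N = (\<Sum>g\<in>T. card {x\<in>E. g x = x})"
      using A.burnside[OF _ finE] finT ordG inv_eq cG by simp
    have fixE: "\<And>g. g \<in> T - {id} \<Longrightarrow> {x\<in>E. g x = x} = {p. g p = p}"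
      unfolding E_def P_def by blast
    have "(\<Sum>g\<in>T. card {x\<in>E. g x = x}) = card {x\<in>E. id x = x} + (\<Sum>g\<in>T - {id}. card {x\<in>E. g x = x})"
      using finT Tid by (simp add: sum.remove)
    also have "(\<Sum>g\<in>T - {id}. card {x\<in>E. g x = x}) = (\<Sum>g\<in>T - {id}. 2)"
      using fixE fix2 by (intro sum.cong) auto
    also have "\<dots> = 2 * (N - 1)" using finT Tid unfolding N_def by simp
    finally have sumfix: "(\<Sum>g\<in>T. card {x\<in>E. g x = x}) = card E + 2 * (N - 1)" by simp
    have os: "\<And>x. x \<in> E \<Longrightarrow> card (orbit G \<phi> x) * card (stabilizer G \<phi> x) = N"
      using A.orbit_stabilizer_theorem ordG by simp
    have orbS: "\<And>x. x \<in> S \<Longrightarrow> orbit G \<phi> x \<subseteq> S"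
    proof -
      fix x assume x: "x \<in> S"
      then have "x \<in> E" unfolding E_def by simp
      then show "orbit G \<phi> x \<subseteq> S" using orbit_eq TS x by blast
    qed
    have stab2: "\<And>x. x \<in> E \<Longrightarrow> card (stabilizer G \<phi> x) \<ge> 2"
    proof -
      fix x assume x: "x \<in> E"
      have fst: "finite (stabilizer G \<phi> x)" using stab_eq[OF x] finT by simp
      show "card (stabilizer G \<phi> x) \<ge> 2"
      proof (cases "x \<in> P")
        case True
        then obtain h where h: "h \<in> T" "h \<noteq> id" "h x = x" unfolding P_def by blast
        have "{id, h} \<subseteq> stabilizer G \<phi> x" using stab_eq[OF x] h Tid by auto
        then have "card {id, h} \<le> card (stabilizer G \<phi> x)" using fst by (rule card_mono[rotated])
        then show ?thesis using h(2) by simp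
      next
        case False
        then have xS: "x \<in> S" using x unfolding E_def by simp
        have "card (orbit G \<phi> x) \<le> card S" using orbS[OF xS] finS by (rule card_mono[rotated])
        then have co: "card (orbit G \<phi> x) \<le> 10" using S10 by simp
        show ?thesis
        proof (rule ccontr)
          assume "\<not> ?thesis"
          then have "card (stabilizer G \<phi> x) \<le> 1" by simp
          then have "card (orbit G \<phi> x) * card (stabilizer G \<phi> x) \<le> 10 * 1"
            using co by (intro mult_le_mono) auto
          then show False using os[OF x] N25 by simp
        qed
      qed
    qed
    have orbs_eq: "orbits G E \<phi> = (\<lambda>x. orbit G \<phi> x) ` E" unfolding orbits_def by auto
    have orb_le: "\<And>Q. Q \<in> orbits G E \<phi> \<Longrightarrow> 2 * card Q \<le> N \<and> card Q dvd N"
    proof -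
      fix Q assume "Q \<in> orbits G E \<phi>"
      then obtain x where x: "x \<in> E" "Q = orbit G \<phi> x" using orbs_eq by blast
      have "card Q * 2 \<le> card Q * card (stabilizer G \<phi> x)" using stab2[OF x(1)] by simp
      then have "2 * card Q \<le> N" using os[OF x(1)] x(2) by simp
      moreover have "card Q dvd N" using os[OF x(1)] x(2) by (metis dvd_triv_left)
      ultimately show "2 * card Q \<le> N \<and> card Q dvd N" by simp
    qed
    define k where "k = card (orbits G E \<phi>)"
    have finO: "finite (orbits G E \<phi>)" using orbs_eq finE by simp
    have cardE: "card E = (\<Sum>Q\<in>orbits G E \<phi>. card Q)"
      using A.disjoint_sum[OF finE, of "\<lambda>_. 1::nat"] by simp
    have "2 * card E = (\<Sum>Q\<in>orbits G E \<phi>. 2 * card Q)" unfolding cardE by (simp add: sum_distrib_left)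
    also have "\<dots> \<le> (\<Sum>Q\<in>orbits G E \<phi>. N)" using orb_le by (intro sum_mono) auto
    also have "\<dots> = k * N" unfolding k_def by simp
    finally have le1: "2 * card E \<le> k * N" .
    have burn2: "k * N = card E + 2 * (N - 1)" using burn sumfix unfolding k_def by simp
    have "k * N < 4 * N" using le1 burn2 N25 by linarith
    then have "k < 4" by (metis mult_less_cancel2)
    then have k3: "k \<le> 3" by simp
    have "S \<subseteq> E" unfolding E_def by simp
    then have "card S \<le> card E" using finE by (intro card_mono)
    then have E3: "card E \<ge> 3" using S3 by simp
    have "k \<ge> 3"
    proof (rule ccontr)
      assume "\<not> k \<ge> 3"
      then have "k * N \<le> 2 * N" by (intro mult_le_mono1) simp
      then show False using burn2 E3 N25 by linarith
    qed
    then have "k = 3" using k3 by simp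
    then obtain Q1 Q2 Q3 where Q: "orbits G E \<phi> = {Q1, Q2, Q3}" "Q1 \<noteq> Q2" "Q2 \<noteq> Q3" "Q1 \<noteq> Q3"
      unfolding k_def by (auto simp: card_3_iff)
    have sE: "card E = card Q1 + card Q2 + card Q3" unfolding cardE Q(1) using Q(2-4) by simp
    have sumN: "card Q1 + card Q2 + card Q3 = N + 2" using burn2 sE N25 \<open>k = 3\<close> by simp
    have OE: "\<And>Q. Q \<in> orbits G E \<phi> \<Longrightarrow> Q \<subseteq> E" using A.orbits_coverture by blast
    have cS: "card S = (\<Sum>Q\<in>orbits G E \<phi>. card {x\<in>Q. x \<in> S})"
    proof -
      have "card S = (\<Sum>x\<in>E. if x \<in> S then 1 else 0)"
        using card_as_sums[OF _ finE, of S "\<lambda>x. x \<in> S"] \<open>S \<subseteq> E\<close> by blast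
      also have "\<dots> = (\<Sum>Q\<in>orbits G E \<phi>. \<Sum>x\<in>Q. if x \<in> S then 1 else 0)"
        using A.disjoint_sum[OF finE, of "\<lambda>x. if x \<in> S then 1 else (0::nat)"] by simp
      also have "\<dots> = (\<Sum>Q\<in>orbits G E \<phi>. card {x\<in>Q. x \<in> S})"
      proof (rule sum.cong[OF refl])
        fix Q assume "Q \<in> orbits G E \<phi>"
        then have "finite Q" using OE finE finite_subset by blast
        then show "(\<Sum>x\<in>Q. if x \<in> S then 1 else 0) = card {x\<in>Q. x \<in> S}"
          using card_as_sums[of "{x\<in>Q. x \<in> S}" Q "\<lambda>x. x \<in> S"] by simp
      qed
      finally show ?thesis .
    qed
    have bnd: "\<And>Q. Q \<in> orbits G E \<phi> \<Longrightarrow> card {x\<in>Q. x \<in> S} \<le> (if card Q \<le> 10 then card Q else 0)"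
    proof -
      fix Q assume Q: "Q \<in> orbits G E \<phi>"
      then have finO1: "finite Q" using OE finE finite_subset by blast
      show "card {x\<in>Q. x \<in> S} \<le> (if card Q \<le> 10 then card Q else 0)"
      proof (cases "{x\<in>Q. x \<in> S} = {}")
        case True then have "card {x\<in>Q. x \<in> S} = 0" by (metis card.empty)
        then show ?thesis by simp
      next
        case False
        then obtain x where x: "x \<in> Q" "x \<in> S" by blast
        obtain y where y: "y \<in> E" "Q = orbit G \<phi> y" using Q orbs_eq by blast
        obtain g0 where g0: "g0 \<in> T" "x = g0 y" using x(1) y orbit_eq by blast
        obtain g0' where g0': "g0' \<in> T" "g0' \<circ> g0 = id" using Tinv[OF g0(1)] by blast
        have "Q \<subseteq> S"
        proof
          fix z assume "z \<in> Q"
          then obtain g where g: "g \<in> T" "z = g y" using y orbit_eq by blast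
          have "z = (g \<circ> g0') x" using g g0 g0'(2) by (metis comp_apply id_apply)
          moreover have "g \<circ> g0' \<in> T" using Tcomp g(1) g0'(1) by blast
          ultimately show "z \<in> S" using TS x(2) by blast
        qed
        then have "card Q \<le> card S" using finS by (rule card_mono[rotated])
        then have "card Q \<le> 10" using S10 by simp
        moreover have "card {x\<in>Q. x \<in> S} \<le> card Q" using finO1 by (intro card_mono) auto
        ultimately show ?thesis by simp
      qed
    qed
    have "card S \<le> (\<Sum>Q\<in>orbits G E \<phi>. (if card Q \<le> 10 then card Q else 0))"
      unfolding cS using bnd by (intro sum_mono) auto
    also have "\<dots> = (if card Q1 \<le> 10 then card Q1 else 0) + (if card Q2 \<le> 10 then card Q2 else 0)
        + (if card Q3 \<le> 10 then card Q3 else 0)"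
      unfolding Q(1) using Q(2-4) by simp
    finally have small: "3 \<le> (if card Q1 \<le> 10 then card Q1 else 0) + (if card Q2 \<le> 10 then card Q2 else 0)
        + (if card Q3 \<le> 10 then card Q3 else 0)" using S3 by simp
    have "Q1 \<in> orbits G E \<phi>" "Q2 \<in> orbits G E \<phi>" "Q3 \<in> orbits G E \<phi>" using Q(1) by auto
    then show False using arith_final[OF N25 _ _ _ _ _ _ sumN small] orb_le by blast
  qed
qed

end
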